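(* Let $\mathfrak{n}$ be a $2$-step nilpotent real Lie algebra with center $\mathfrak{z}$ and commutator $\mathfrak{n}'$, and let $J$ be a linear map with $J^2=-I$ and $J\mathfrak{n}'\subset\mathfrak{z}$. Put $\mathfrak{z}_0=\mathfrak{n}'+J\mathfrak{n}'$. Let $\langle\cdot,\cdot\rangle$ be any inner product on $\mathfrak{n}$ with $\langle Jx,Jy\rangle=\langle x,y\rangle$, let $\mathfrak{v}$ be the orthogonal complement of $\mathfrak{z}_0$ (so $\mathfrak{v}$ is $J$-invariant, $\dim\mathfrak{v}=2n$), and $J_{\mathfrak{v}}=J|_{\mathfrak{v}}$. For $z\in\mathfrak{z}_0$ define $j(z)\in\operatorname{End}(\mathfrak{v})$ by $\langle j(z)v,w\rangle=\langle z,[v,w]\rangle$ for $v,w\in\mathfrak{v}$, and $S(z)=j(Jz)-J_{\mathfrak{v}}\circ j(z)$. Then $J$ is integrable (i.e. $N_J\equiv0$) if and only if $S(z)\circ J_{\mathfrak{v}}=J_{\mathfrak{v}}\circ S(z)$ for all $z\in\mathfrak{z}_0$. Moreover, for any subspace $\mathfrak{p}\subset\mathfrak{z}_0$ with $\mathfrak{z}_0=\mathfrak{p}\oplus J\mathfrak{p}$, $J$ is integrable if and only if $S(z)$ commutes with $J_{\mathfrak{v}}$ for all $z\in\mathfrak{p}$.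
   Context: $N_J(x,y)=[x,y]+J([Jx,y]+[x,Jy])-[Jx,Jy]$. A Lie algebra $\mathfrak{n}$ is $2$-step nilpotent if it is non-abelian and $\mathfrak{n}'=[\mathfrak{n},\mathfrak{n}]\subset\mathfrak{z}$. *)

theory Defs
  imports "HOL-Analysis.Analysis"
begin

definition lie_algebra :: "('a::real_vector \<Rightarrow> 'a \<Rightarrow> 'a) \<Rightarrow> bool" where
  "lie_algebra br \<longleftrightarrow> bilinear br \<and> (\<forall>x. br x x = 0) \<and>
     (\<forall>x y z. br x (br y z) + br y (br z x) + br z (br x y) = 0)"

definition lie_center :: "('a::real_vector \<Rightarrow> 'a \<Rightarrow> 'a) \<Rightarrow> 'a set" where
  "lie_center br = {z. \<forall>x. br z x = 0}"

definition commutator :: "('a::real_vector \<Rightarrow> 'a \<Rightarrow> 'a) \<Rightarrow> 'a set" where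
  "commutator br = span {br x y | x y. True}"

definition two_step_nilpotent :: "('a::real_vector \<Rightarrow> 'a \<Rightarrow> 'a) \<Rightarrow> bool" where
  "two_step_nilpotent br \<longleftrightarrow> lie_algebra br \<and> (\<exists>x y. br x y \<noteq> 0) \<and>
     commutator br \<subseteq> lie_center br"

definition nijenhuis :: "('a::real_vector \<Rightarrow> 'a \<Rightarrow> 'a) \<Rightarrow> ('a \<Rightarrow> 'a) \<Rightarrow> 'a \<Rightarrow> 'a \<Rightarrow> 'a" where
  "nijenhuis br J x y = br x y + J (br (J x) y + br x (J y)) - br (J x) (J y)"

definition integrable :: "('a::real_vector \<Rightarrow> 'a \<Rightarrow> 'a) \<Rightarrow> ('a \<Rightarrow> 'a) \<Rightarrow> bool" where
  "integrable br J \<longleftrightarrow> (\<forall>x y. nijenhuis br J x y = 0)"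

definition subspace_sum :: "'a::real_vector set \<Rightarrow> 'a set \<Rightarrow> 'a set" where
  "subspace_sum A B = {a + b | a b. a \<in> A \<and> b \<in> B}"

definition zeta0 :: "('a::real_vector \<Rightarrow> 'a \<Rightarrow> 'a) \<Rightarrow> ('a \<Rightarrow> 'a) \<Rightarrow> 'a set" where
  "zeta0 br J = subspace_sum (commutator br) (J ` commutator br)"

definition vspace :: "('a::real_inner \<Rightarrow> 'a \<Rightarrow> 'a) \<Rightarrow> ('a \<Rightarrow> 'a) \<Rightarrow> 'a set" where
  "vspace br J = {x. \<forall>z \<in> zeta0 br J. inner x z = 0}"

definition jmap :: "('a::real_inner \<Rightarrow> 'a \<Rightarrow> 'a) \<Rightarrow> ('a \<Rightarrow> 'a) \<Rightarrow> 'a \<Rightarrow> 'a \<Rightarrow> 'a" where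
  "jmap br J z v = (THE u. u \<in> vspace br J \<and> (\<forall>w \<in> vspace br J. inner u w = inner z (br v w)))"

definition Smap :: "('a::real_inner \<Rightarrow> 'a \<Rightarrow> 'a) \<Rightarrow> ('a \<Rightarrow> 'a) \<Rightarrow> 'a \<Rightarrow> 'a \<Rightarrow> 'a" where
  "Smap br J z v = jmap br J (J z) v - J (jmap br J z v)"

definition S_commutes :: "('a::real_inner \<Rightarrow> 'a \<Rightarrow> 'a) \<Rightarrow> ('a \<Rightarrow> 'a) \<Rightarrow> 'a \<Rightarrow> bool" where
  "S_commutes br J z \<longleftrightarrow> (\<forall>v \<in> vspace br J. Smap br J z (J v) = J (Smap br J z v))"

end

theory Submission
  imports Defs
begin

locale nilJ =
  fixes br :: "'a::euclidean_space \<Rightarrow> 'a \<Rightarrow> 'a" and J :: "'a \<Rightarrow> 'a"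
  assumes nil: "two_step_nilpotent br"
    and lJ: "linear J"
    and JJ: "\<And>x. J (J x) = - x"
    and Jc: "J ` commutator br \<subseteq> lie_center br"
    and Jo: "\<And>x y. inner (J x) (J y) = inner x y"
begin

abbreviation "Z \<equiv> zeta0 br J"
abbreviation "V \<equiv> vspace br J"

lemma bil: "bilinear br"
  using nil unfolding two_step_nilpotent_def lie_algebra_def by blast

lemma alt: "br x x = 0"
  using nil unfolding two_step_nilpotent_def lie_algebra_def by blast

lemma anti: "br y x = - br x y"
proof -
  have e: "br (x+y) (x+y) = br x x + br x y + (br y x + br y y)"
    by (simp add: bilinear_ladd[OF bil] bilinear_radd[OF bil])
  have "br x y + br y x = 0"
    using e alt[of "x+y"] alt[of x] alt[of y] by simp
  then have "br y x + br x y = 0" by (simp add: alt algebra_simps)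
  then show ?thesis by (simp add: eq_neg_iff_add_eq_0)
qed

lemma comm_sub: "commutator br \<subseteq> lie_center br"
  using nil unfolding two_step_nilpotent_def by blast

lemma br_comm: "br x y \<in> commutator br"
  unfolding commutator_def by (rule span_base) blast

lemma subC: "subspace (commutator br)"
  unfolding commutator_def by (rule subspace_span)

lemma Jadd: "J (x + y) = J x + J y" using lJ by (rule linear_add)
lemma Jdiff: "J (x - y) = J x - J y" using lJ by (rule linear_diff)
lemma Jneg: "J (- x) = - J x" using lJ by (rule linear_neg)
lemma Jscale: "J (c *\<^sub>R x) = c *\<^sub>R J x" using lJ by (rule linear_scale)

lemma Jinner: "inner (J a) w = - inner a (J w)"
proof -
  have "inner (J a) w = inner (J (J a)) (J w)" by (rule Jo[symmetric])
  then show ?thesis by (simp add: JJ)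
qed

lemma subZ: "subspace Z"
  unfolding zeta0_def subspace_sum_def
  by (rule subspace_sums[OF subC linear_subspace_image[OF lJ subC]])

lemma spanZ: "span Z = Z" using subZ by (simp add: span_eq_iff)

lemma Z_center: "z \<in> Z \<Longrightarrow> br z x = 0"
proof -
  assume "z \<in> Z"
  then obtain a b where ab: "z = a + J b" "a \<in> commutator br" "b \<in> commutator br"
    unfolding zeta0_def subspace_sum_def by blast
  have "br a x = 0" using ab comm_sub unfolding lie_center_def by blast
  moreover have "br (J b) x = 0" using ab Jc unfolding lie_center_def by blast
  ultimately show ?thesis using ab by (simp add: bilinear_ladd[OF bil])
qed

lemma Z_center2: "z \<in> Z \<Longrightarrow> br x z = 0"
  using Z_center anti by (metis neg_equal_0_iff_equal)

lemma JZ: "z \<in> Z \<Longrightarrow> J z \<in> Z"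
proof -
  assume "z \<in> Z"
  then obtain a b where ab: "z = a + J b" "a \<in> commutator br" "b \<in> commutator br"
    unfolding zeta0_def subspace_sum_def by blast
  have "J z = (- b) + J a" using ab by (simp add: Jadd JJ)
  moreover have "- b \<in> commutator br" using ab subC by (simp add: subspace_neg)
  ultimately show ?thesis using ab unfolding zeta0_def subspace_sum_def by blast
qed

lemma subV: "subspace V"
  unfolding vspace_def subspace_def
  by (auto simp: inner_add_left)

lemma JV: "v \<in> V \<Longrightarrow> J v \<in> V"
  unfolding vspace_def using JZ Jinner by auto

lemma V_Z: "v \<in> V \<Longrightarrow> z \<in> Z \<Longrightarrow> inner v z = 0"
  unfolding vspace_def by auto

lemma decomp: obtains a b where "a \<in> Z" "b \<in> V" "x = a + b"
proof -
  obtain y z where "y \<in> span Z" "\<And>w. w \<in> span Z \<Longrightarrow> orthogonal z w" "x = y + z"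
    using orthogonal_subspace_decomp_exists[of Z x] by blast
  moreover have "z \<in> V" using calculation(2) unfolding spanZ vspace_def orthogonal_def by auto
  ultimately show ?thesis using that[of y z] spanZ by auto
qed

lemma V_uniq: assumes "u \<in> V" "u' \<in> V" "\<And>w. w \<in> V \<Longrightarrow> inner u w = inner u' w"
  shows "u = u'"
proof -
  have "u - u' \<in> V" using assms subV by (simp add: subspace_diff)
  then have "inner u (u - u') = inner u' (u - u')" using assms by blast
  then have "inner (u - u') (u - u') = 0" by (simp add: inner_diff_left)
  then show ?thesis by simp
qed

lemma j_ex: "\<exists>u. u \<in> V \<and> (\<forall>w \<in> V. inner u w = inner z (br v w))"
proof -
  have lin: "linear (br v)" using bil unfolding bilinear_def by blast
  define u0 where "u0 = adjoint (br v) z"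
  have u0: "inner u0 w = inner z (br v w)" for w
    unfolding u0_def using adjoint_works[OF lin, of w z] by (simp add: inner_commute)
  obtain a b where ab: "a \<in> Z" "b \<in> V" "u0 = a + b" by (rule decomp)
  have "inner b w = inner z (br v w)" if "w \<in> V" for w
  proof -
    have "inner a w = 0" using V_Z[OF that ab(1)] by (simp add: inner_commute)
    then show ?thesis using u0[of w] ab by (simp add: inner_add_left)
  qed
  then show ?thesis using ab by blast
qed

lemma j_char: assumes "u \<in> V" "\<And>w. w \<in> V \<Longrightarrow> inner u w = inner z (br v w)"
  shows "jmap br J z v = u"
  unfolding jmap_def
proof (rule the_equality)
  show "u \<in> V \<and> (\<forall>w\<in>V. inner u w = inner z (br v w))" using assms by blast
next
  fix u' assume "u' \<in> V \<and> (\<forall>w\<in>V. inner u' w = inner z (br v w))"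
  then show "u' = u" using assms V_uniq[of u' u] by auto
qed

lemma jV: "jmap br J z v \<in> V" and jin: "w \<in> V \<Longrightarrow> inner (jmap br J z v) w = inner z (br v w)"
proof -
  obtain u where u: "u \<in> V" "\<forall>w \<in> V. inner u w = inner z (br v w)" using j_ex by blast
  have "jmap br J z v = u" using j_char u by blast
  then show "jmap br J z v \<in> V" "w \<in> V \<Longrightarrow> inner (jmap br J z v) w = inner z (br v w)"
    using u by auto
qed

lemma j_add: "jmap br J (z1 + z2) v = jmap br J z1 v + jmap br J z2 v"
  by (rule j_char) (auto simp: jV subV subspace_add inner_add_left jin)

lemma j_neg: "jmap br J (- z) v = - jmap br J z v"
  by (rule j_char) (auto simp: jV subV subspace_neg jin)

lemma S_add: "Smap br J (z1 + z2) v = Smap br J z1 v + Smap br J z2 v"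
  unfolding Smap_def by (simp add: Jadd j_add Jdiff)

lemma S_J: "Smap br J (J z) v = - J (Smap br J z v)"
  unfolding Smap_def by (simp add: JJ j_neg Jdiff)

lemma SV: "v \<in> V \<Longrightarrow> Smap br J z v \<in> V"
  unfolding Smap_def using jV JV subV by (simp add: subspace_diff)

lemma key: assumes "v \<in> V" "w \<in> V"
  shows "inner z (nijenhuis br J v w) =
     - inner (Smap br J z (J v) - J (Smap br J z v)) w"
proof -
  have Jw: "J w \<in> V" using JV assms by blast
  have "inner (Smap br J z (J v) - J (Smap br J z v)) w =
      inner (jmap br J (J z) (J v)) w - inner (J (jmap br J z (J v))) w
      - inner (J (jmap br J (J z) v)) w - inner (jmap br J z v) w"
    unfolding Smap_def by (simp add: Jdiff JJ inner_diff_left inner_add_left)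
  also have "\<dots> = inner (J z) (br (J v) w) + inner z (br (J v) (J w))
      + inner (J z) (br v (J w)) - inner z (br v w)"
    by (simp add: Jinner jin assms Jw)
  finally have 1: "inner (Smap br J z (J v) - J (Smap br J z v)) w =
      inner (J z) (br (J v) w) + inner z (br (J v) (J w))
      + inner (J z) (br v (J w)) - inner z (br v w)" .
  have "inner z (nijenhuis br J v w) = inner z (br v w) - inner (J z) (br (J v) w)
     - inner (J z) (br v (J w)) - inner z (br (J v) (J w))"
    unfolding nijenhuis_def
    by (simp add: inner_add_right inner_diff_right inner_add_left inner_commute[of z "J _"] Jinner
        inner_commute[of "J z"])
  then show ?thesis using 1 by simp
qed

lemma N_Z: "nijenhuis br J v w \<in> Z"
proof -
  have "nijenhuis br J v w = (br v w - br (J v) (J w)) + J (br (J v) w + br v (J w))"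
    unfolding nijenhuis_def by simp
  moreover have "br v w - br (J v) (J w) \<in> commutator br"
    using subC br_comm by (simp add: subspace_diff)
  moreover have "br (J v) w + br v (J w) \<in> commutator br"
    using subC br_comm by (simp add: subspace_add)
  ultimately show ?thesis unfolding zeta0_def subspace_sum_def by blast
qed

lemma N_red1: "a \<in> Z \<Longrightarrow> nijenhuis br J (a + b) y = nijenhuis br J b y"
  unfolding nijenhuis_def
  by (simp add: Jadd bilinear_ladd[OF bil] Z_center JZ)

lemma N_red2: "a \<in> Z \<Longrightarrow> nijenhuis br J y (a + b) = nijenhuis br J y b"
  unfolding nijenhuis_def
  by (simp add: Jadd bilinear_radd[OF bil] Z_center2 JZ)

lemma part1: "integrable br J \<longleftrightarrow> (\<forall>z \<in> Z. S_commutes br J z)"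
proof
  assume I: "integrable br J"
  show "\<forall>z \<in> Z. S_commutes br J z"
    unfolding S_commutes_def
  proof (intro ballI)
    fix z v assume z: "z \<in> Z" and v: "v \<in> V"
    let ?X = "Smap br J z (J v) - J (Smap br J z v)"
    have XV: "?X \<in> V" using SV JV v subV by (simp add: subspace_diff)
    have "inner ?X w = 0" if "w \<in> V" for w
      using key[OF v that, of z] I unfolding integrable_def by simp
    then have "inner ?X ?X = 0" using XV by blast
    then show "Smap br J z (J v) = J (Smap br J z v)" by simp
  qed
next
  assume C: "\<forall>z \<in> Z. S_commutes br J z"
  show "integrable br J" unfolding integrable_def
  proof (intro allI)
    fix x y
    obtain a b where ab: "a \<in> Z" "b \<in> V" "x = a + b" by (rule decomp)
    obtain c d where cd: "c \<in> Z" "d \<in> V" "y = c + d" by (rule decomp)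
    have eq: "nijenhuis br J x y = nijenhuis br J b d"
      using ab cd N_red1 N_red2 by simp
    let ?N = "nijenhuis br J b d"
    have "inner ?N ?N = 0"
      using key[OF ab(2) cd(2), of ?N] C N_Z ab(2) unfolding S_commutes_def by simp
    then show "nijenhuis br J x y = 0" using eq by simp
  qed
qed

lemma commJ: "S_commutes br J z \<Longrightarrow> S_commutes br J (J z)"
  unfolding S_commutes_def by (simp add: S_J Jneg)

lemma commadd: "S_commutes br J z1 \<Longrightarrow> S_commutes br J z2 \<Longrightarrow> S_commutes br J (z1 + z2)"
  unfolding S_commutes_def by (simp add: S_add Jadd)

lemma part2: assumes "p \<subseteq> Z" "subspace_sum p (J ` p) = Z"
  shows "integrable br J \<longleftrightarrow> (\<forall>z \<in> p. S_commutes br J z)"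
  unfolding part1
proof
  assume "\<forall>z\<in>Z. S_commutes br J z" then show "\<forall>z \<in> p. S_commutes br J z" using assms by blast
next
  assume P: "\<forall>z \<in> p. S_commutes br J z"
  show "\<forall>z\<in>Z. S_commutes br J z"
  proof
    fix z assume "z \<in> Z"
    then obtain a b where "a \<in> p" "b \<in> p" "z = a + J b"
      using assms(2) unfolding subspace_sum_def by blast
    then show "S_commutes br J z" using P commJ commadd by simp
  qed
qed

end

theorem mainTheorem11:
  fixes br :: "'a::euclidean_space \<Rightarrow> 'a \<Rightarrow> 'a" and J :: "'a \<Rightarrow> 'a"
  assumes "two_step_nilpotent br"
    and "linear J"
    and "\<And>x. J (J x) = - x"
    and "J ` commutator br \<subseteq> lie_center br"
    and "\<And>x y. inner (J x) (J y) = inner x y"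
  shows "(integrable br J \<longleftrightarrow> (\<forall>z \<in> zeta0 br J. S_commutes br J z)) \<and>
         (\<forall>p. subspace p \<and> p \<subseteq> zeta0 br J \<and> subspace_sum p (J ` p) = zeta0 br J \<and>
               p \<inter> J ` p = {0} \<longrightarrow>
               (integrable br J \<longleftrightarrow> (\<forall>z \<in> p. S_commutes br J z)))"
proof -
  interpret nilJ br J by (rule nilJ.intro) (rule assms)+
  show ?thesis using part1 part2 by blast
qed

end
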